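(* Let $\mathcal{A}$ be a finite-dimensional Hopf algebra over $\mathbb{C}$ with coproduct $\Delta$, let $\Pi_{\phi}:\mathcal{A}\to\mathrm{End}(V)$ be a representation of $\mathcal{A}$ on a vector space $V$, and let $|\phi_r\rangle\in V$. Define $$\mathcal{T}_r=\{a\in\mathcal{A} : (\mathrm{id}\otimes\Pi_{\phi})\Delta(a)\,(1\otimes|\phi_r\rangle)=a\otimes|\phi_r\rangle\},$$ where both sides are elements of $\mathcal{A}\otimes V$. Then $\mathcal{T}_r$ is a subalgebra of $\mathcal{A}$, and moreover: (1) $\Delta(\mathcal{T}_r)\subset\mathcal{A}\otimes\mathcal{T}_r$; (2) for every $a\in\mathcal{T}_r$, $(\mathrm{id}\otimes\Pi_{\phi}\otimes\Pi_{\phi})(\mathrm{id}\otimes\Delta)\Delta(a)\,(1\otimes|\phi_r\rangle\otimes|\phi_r\rangle)=a\otimes|\phi_r\rangle\otimes|\phi_r\rangle$.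
   Context: In $(\mathrm{id}\otimes\Pi_{\phi})\Delta(a)(1\otimes|\phi_r\rangle)$, writing $\Delta(a)=\sum a^{(1)}\otimes a^{(2)}$, the expression means $\sum a^{(1)}\otimes\Pi_{\phi}(a^{(2)})|\phi_r\rangle\in\mathcal{A}\otimes V$; analogously for the triple tensor expression. *)

theory Defs
  imports Complex_Main
begin

(* Coordinates: A is finite-dimensional with basis indexed by the finite type 'i;
   an element of A is its coordinate function 'i => complex.
   V is modelled (via a Hamel basis indexed by 'j) as finitely supported
   functions 'j => complex.  A (x) V is then 'i => 'j => complex (coordinates
   w.r.t. e_i (x) f_j), A (x) A is 'i => 'i => complex, etc. *)

definition amult :: "('i::finite \<Rightarrow> 'i \<Rightarrow> 'i \<Rightarrow> complex) \<Rightarrow> ('i \<Rightarrow> complex) \<Rightarrow> ('i \<Rightarrow> complex) \<Rightarrow> ('i \<Rightarrow> complex)"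
  where "amult mu x y = (\<lambda>k. \<Sum>i\<in>UNIV. \<Sum>j\<in>UNIV. x i * y j * mu i j k)"

definition coprod :: "('i::finite \<Rightarrow> 'i \<Rightarrow> 'i \<Rightarrow> complex) \<Rightarrow> ('i \<Rightarrow> complex) \<Rightarrow> ('i \<Rightarrow> 'i \<Rightarrow> complex)"
  where "coprod delta x = (\<lambda>i j. \<Sum>k\<in>UNIV. x k * delta k i j)"

definition counit_app :: "('i::finite \<Rightarrow> complex) \<Rightarrow> ('i \<Rightarrow> complex) \<Rightarrow> complex"
  where "counit_app eps x = (\<Sum>i\<in>UNIV. x i * eps i)"

(* Hopf algebra axioms in coordinates; S i k = k-th coordinate of S(e_i) *)
definition is_hopf_algebra ::
  "('i::finite \<Rightarrow> 'i \<Rightarrow> 'i \<Rightarrow> complex) \<Rightarrow> ('i \<Rightarrow> complex) \<Rightarrow> ('i \<Rightarrow> 'i \<Rightarrow> 'i \<Rightarrow> complex)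
   \<Rightarrow> ('i \<Rightarrow> complex) \<Rightarrow> ('i \<Rightarrow> 'i \<Rightarrow> complex) \<Rightarrow> bool"
  where "is_hopf_algebra mu one delta eps S \<longleftrightarrow>
    (\<forall>x y z. amult mu (amult mu x y) z = amult mu x (amult mu y z)) \<and>
    (\<forall>x. amult mu one x = x \<and> amult mu x one = x) \<and>
    (\<forall>x i j m. (\<Sum>l\<in>UNIV. coprod delta x l m * delta l i j)
              = (\<Sum>l\<in>UNIV. coprod delta x i l * delta l j m)) \<and>
    (\<forall>x j. (\<Sum>i\<in>UNIV. eps i * coprod delta x i j) = x j) \<and>
    (\<forall>x i. (\<Sum>j\<in>UNIV. coprod delta x i j * eps j) = x i) \<and>
    (\<forall>x y i j. coprod delta (amult mu x y) i j =
        (\<Sum>i1\<in>UNIV. \<Sum>i2\<in>UNIV. \<Sum>j1\<in>UNIV. \<Sum>j2\<in>UNIV.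
           coprod delta x i1 j1 * coprod delta y i2 j2 * mu i1 i2 i * mu j1 j2 j)) \<and>
    (\<forall>i j. coprod delta one i j = one i * one j) \<and>
    (\<forall>x y. counit_app eps (amult mu x y) = counit_app eps x * counit_app eps y) \<and>
    counit_app eps one = 1 \<and>
    (\<forall>x k. (\<Sum>i\<in>UNIV. \<Sum>j\<in>UNIV. coprod delta x i j * (\<Sum>p\<in>UNIV. S i p * mu p j k))
           = counit_app eps x * one k) \<and>
    (\<forall>x k. (\<Sum>i\<in>UNIV. \<Sum>j\<in>UNIV. coprod delta x i j * (\<Sum>q\<in>UNIV. S j q * mu i q k))
           = counit_app eps x * one k)"

definition fin_vec :: "('j \<Rightarrow> complex) \<Rightarrow> bool"
  where "fin_vec v \<longleftrightarrow> finite {j. v j \<noteq> 0}"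

(* Pi i = Pi_phi(e_i); Pi_phi(x) = sum_i x_i Pi i.  Representation of A on V. *)
definition is_representation ::
  "('i::finite \<Rightarrow> 'i \<Rightarrow> 'i \<Rightarrow> complex) \<Rightarrow> ('i \<Rightarrow> complex) \<Rightarrow> ('i \<Rightarrow> ('j \<Rightarrow> complex) \<Rightarrow> ('j \<Rightarrow> complex)) \<Rightarrow> bool"
  where "is_representation mu one Pi \<longleftrightarrow>
    (\<forall>i v. fin_vec v \<longrightarrow> fin_vec (Pi i v)) \<and>
    (\<forall>i v w. fin_vec v \<longrightarrow> fin_vec w \<longrightarrow> Pi i (\<lambda>k. v k + w k) = (\<lambda>k. Pi i v k + Pi i w k)) \<and>
    (\<forall>i c v. fin_vec v \<longrightarrow> Pi i (\<lambda>k. c * v k) = (\<lambda>k. c * Pi i v k)) \<and>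
    (\<forall>i j v. fin_vec v \<longrightarrow> Pi i (Pi j v) = (\<lambda>k. \<Sum>l\<in>UNIV. mu i j l * Pi l v k)) \<and>
    (\<forall>v. fin_vec v \<longrightarrow> (\<lambda>k. \<Sum>l\<in>UNIV. one l * Pi l v k) = v)"

definition stab_set :: "('i::finite \<Rightarrow> 'i \<Rightarrow> 'i \<Rightarrow> complex) \<Rightarrow> ('i \<Rightarrow> ('j \<Rightarrow> complex) \<Rightarrow> ('j \<Rightarrow> complex))
   \<Rightarrow> ('j \<Rightarrow> complex) \<Rightarrow> ('i \<Rightarrow> complex) set"
  where "stab_set delta Pi phi =
    {a. \<forall>i k. (\<Sum>j\<in>UNIV. coprod delta a i j * Pi j phi k) = a i * phi k}"

definition is_subalgebra :: "('i::finite \<Rightarrow> 'i \<Rightarrow> 'i \<Rightarrow> complex) \<Rightarrow> ('i \<Rightarrow> complex) \<Rightarrow> ('i \<Rightarrow> complex) set \<Rightarrow> bool"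
  where "is_subalgebra mu one T \<longleftrightarrow>
    (\<lambda>_. 0) \<in> T \<and> one \<in> T \<and>
    (\<forall>x\<in>T. \<forall>y\<in>T. (\<lambda>k. x k + y k) \<in> T) \<and>
    (\<forall>c. \<forall>x\<in>T. (\<lambda>k. c * x k) \<in> T) \<and>
    (\<forall>x\<in>T. \<forall>y\<in>T. amult mu x y \<in> T)"

end

theory Submission
  imports Defs
begin

lemma fin_vec_add: "fin_vec v \<Longrightarrow> fin_vec w \<Longrightarrow> fin_vec (\<lambda>k. v k + w k)"
  unfolding fin_vec_def
  by (rule finite_subset[of _ "{j. v j \<noteq> 0} \<union> {j. w j \<noteq> 0}"]) auto

lemma fin_vec_smult: "fin_vec v \<Longrightarrow> fin_vec (\<lambda>k. c * v k)"
  unfolding fin_vec_def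
  by (rule finite_subset[of _ "{j. v j \<noteq> 0}"]) auto

lemma fin_vec_zero: "fin_vec (\<lambda>k. 0)"
  unfolding fin_vec_def by simp

lemma fin_vec_sum: "finite A \<Longrightarrow> (\<And>l. l \<in> A \<Longrightarrow> fin_vec (v l)) \<Longrightarrow>
   fin_vec (\<lambda>k. \<Sum>l\<in>A. c l * v l k)"
proof (induction A rule: finite_induct)
  case empty then show ?case by (simp add: fin_vec_zero)
next
  case (insert x F)
  then show ?case using fin_vec_add[OF fin_vec_smult[of "v x" "c x"], of "\<lambda>k. \<Sum>l\<in>F. c l * v l k"]
    by simp
qed

lemma Pi_sum:
  assumes rep: "is_representation mu one Pi"
  shows "finite A \<Longrightarrow> (\<And>l. l \<in> A \<Longrightarrow> fin_vec (v l)) \<Longrightarrow>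
   Pi i (\<lambda>k. \<Sum>l\<in>A. c l * v l k) = (\<lambda>k. \<Sum>l\<in>A. c l * Pi i (v l) k)"
proof (induction A rule: finite_induct)
  case empty
  have "Pi i (\<lambda>k. 0 * (0::complex)) = (\<lambda>k. 0 * Pi i (\<lambda>k. 0) k)"
    using rep fin_vec_zero unfolding is_representation_def by blast
  then show ?case by simp
next
  case (insert x F)
  have f1: "fin_vec (\<lambda>k. c x * v x k)" using fin_vec_smult[OF insert.prems[of x]] by simp
  have f2: "fin_vec (\<lambda>k. \<Sum>l\<in>F. c l * v l k)" using insert.hyps(1) by (rule fin_vec_sum) (simp add: insert.prems)
  have "Pi i (\<lambda>k. \<Sum>l\<in>insert x F. c l * v l k) = Pi i (\<lambda>k. c x * v x k + (\<Sum>l\<in>F. c l * v l k))"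
    using insert by simp
  also have "\<dots> = (\<lambda>k. Pi i (\<lambda>k. c x * v x k) k + Pi i (\<lambda>k. \<Sum>l\<in>F. c l * v l k) k)"
    using rep f1 f2 unfolding is_representation_def by blast
  also have "Pi i (\<lambda>k. c x * v x k) = (\<lambda>k. c x * Pi i (v x) k)"
    using rep insert unfolding is_representation_def by blast
  finally show ?case using insert by simp
qed

lemma swap4: "(\<Sum>j\<in>A. \<Sum>a\<in>B. \<Sum>b\<in>C. \<Sum>c\<in>D. \<Sum>d\<in>E. f j a b c d) = (\<Sum>a\<in>B. \<Sum>b\<in>C. \<Sum>c\<in>D. \<Sum>d\<in>E. \<Sum>j\<in>A. (f j a b c d::'z::comm_monoid_add))"
proof -
  have "(\<Sum>j\<in>A. \<Sum>a\<in>B. \<Sum>b\<in>C. \<Sum>c\<in>D. \<Sum>d\<in>E. f j a b c d) = (\<Sum>a\<in>B. \<Sum>j\<in>A. \<Sum>b\<in>C. \<Sum>c\<in>D. \<Sum>d\<in>E. f j a b c d)"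
    by (rule sum.swap)
  also have "\<dots> = (\<Sum>a\<in>B. \<Sum>b\<in>C. \<Sum>j\<in>A. \<Sum>c\<in>D. \<Sum>d\<in>E. f j a b c d)"
    by (rule sum.cong[OF refl], rule sum.swap)
  also have "\<dots> = (\<Sum>a\<in>B. \<Sum>b\<in>C. \<Sum>c\<in>D. \<Sum>j\<in>A. \<Sum>d\<in>E. f j a b c d)"
    by (rule sum.cong[OF refl], rule sum.cong[OF refl], rule sum.swap)
  also have "\<dots> = (\<Sum>a\<in>B. \<Sum>b\<in>C. \<Sum>c\<in>D. \<Sum>d\<in>E. \<Sum>j\<in>A. f j a b c d)"
    by (rule sum.cong[OF refl], rule sum.cong[OF refl], rule sum.cong[OF refl], rule sum.swap)
  finally show ?thesis .
qed
theorem lemma1: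
  fixes mu :: "'i::finite \<Rightarrow> 'i \<Rightarrow> 'i \<Rightarrow> complex"
    and one eps :: "'i \<Rightarrow> complex"
    and delta :: "'i \<Rightarrow> 'i \<Rightarrow> 'i \<Rightarrow> complex"
    and S :: "'i \<Rightarrow> 'i \<Rightarrow> complex"
    and Pi :: "'i \<Rightarrow> ('j \<Rightarrow> complex) \<Rightarrow> ('j \<Rightarrow> complex)"
    and phi :: "'j \<Rightarrow> complex"
  assumes "is_hopf_algebra mu one delta eps S"
    and "is_representation mu one Pi"
    and "fin_vec phi"
  shows "is_subalgebra mu one (stab_set delta Pi phi) \<and>
    (\<forall>a\<in>stab_set delta Pi phi. \<forall>i. (\<lambda>j. coprod delta a i j) \<in> stab_set delta Pi phi) \<and>
    (\<forall>a\<in>stab_set delta Pi phi. \<forall>i k k'.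
       (\<Sum>j\<in>UNIV. \<Sum>m\<in>UNIV. (\<Sum>l\<in>UNIV. coprod delta a i l * delta l j m) * Pi j phi k * Pi m phi k')
       = a i * phi k * phi k')"
proof -
  note H = assms(1)[unfolded is_hopf_algebra_def]
  note R = assms(2)[unfolded is_representation_def]
  have coassoc: "\<And>x i j m. (\<Sum>l\<in>UNIV. coprod delta x l m * delta l i j)
              = (\<Sum>l\<in>UNIV. coprod delta x i l * delta l j m)" using H by blast
  have cmult: "\<And>x y i j. coprod delta (amult mu x y) i j =
        (\<Sum>i1\<in>UNIV. \<Sum>i2\<in>UNIV. \<Sum>j1\<in>UNIV. \<Sum>j2\<in>UNIV.
           coprod delta x i1 j1 * coprod delta y i2 j2 * mu i1 i2 i * mu j1 j2 j)" using H by blast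
  have cone: "\<And>i j. coprod delta one i j = one i * one j" using H by blast
  have finPi: "\<And>i. fin_vec (Pi i phi)" using R assms(3) by blast
  have Pmul: "\<And>i j. Pi i (Pi j phi) = (\<lambda>k. \<Sum>l\<in>UNIV. mu i j l * Pi l phi k)"
    using R assms(3) by blast
  have Punit0: "(\<lambda>k. \<Sum>l\<in>UNIV. one l * Pi l phi k) = phi"
    using R assms(3) by blast
  have Punit: "\<And>k. (\<Sum>l\<in>UNIV. one l * Pi l phi k) = phi k"
    using Punit0 by (simp add: fun_eq_iff)
  define T where "T = stab_set delta Pi phi"
  have memT: "\<And>a. a \<in> T \<longleftrightarrow> (\<forall>i k. (\<Sum>j\<in>UNIV. coprod delta a i j * Pi j phi k) = a i * phi k)"
    unfolding T_def stab_set_def by simp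
  have z: "(\<lambda>_. 0) \<in> T" unfolding memT coprod_def by simp
  have o: "one \<in> T"
  proof -
    have "(\<Sum>j\<in>UNIV. one i * one j * Pi j phi k) = one i * phi k" for i k
      by (simp add: mult.assoc sum_distrib_left[symmetric] Punit)
    then show ?thesis unfolding memT cone by simp
  qed
  have ad: "(\<lambda>k. x k + y k) \<in> T" if "x \<in> T" "y \<in> T" for x y
  proof -
    have "coprod delta (\<lambda>k. x k + y k) i j = coprod delta x i j + coprod delta y i j" for i j
      unfolding coprod_def by (simp add: distrib_right sum.distrib)
    then show ?thesis using that unfolding memT
      by (simp add: distrib_right sum.distrib)
  qed
  have sm: "(\<lambda>k. c * x k) \<in> T" if "x \<in> T" for x c
  proof -
    have "coprod delta (\<lambda>k. c * x k) i j = c * coprod delta x i j" for i j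
      unfolding coprod_def by (simp add: sum_distrib_left mult.assoc)
    then show ?thesis using that unfolding memT
      by (simp add: sum_distrib_left[symmetric] mult.assoc)
  qed
  have mu: "amult mu x y \<in> T" if x: "x \<in> T" and y: "y \<in> T" for x y
  proof -
    have step1: "(\<Sum>j2\<in>UNIV. coprod delta y i2 j2 * Pi j1 (Pi j2 phi) k) = y i2 * Pi j1 phi k"
      for i2 j1 k
    proof -
      have "Pi j1 (\<lambda>k. \<Sum>j2\<in>UNIV. coprod delta y i2 j2 * Pi j2 phi k)
          = (\<lambda>k. \<Sum>j2\<in>UNIV. coprod delta y i2 j2 * Pi j1 (Pi j2 phi) k)"
        by (rule Pi_sum[OF assms(2)]) (auto simp: finPi)
      moreover have "(\<lambda>k. \<Sum>j2\<in>UNIV. coprod delta y i2 j2 * Pi j2 phi k) = (\<lambda>k. y i2 * phi k)"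
        using y unfolding memT by auto
      moreover have "Pi j1 (\<lambda>k. y i2 * phi k) = (\<lambda>k. y i2 * Pi j1 phi k)"
        using R assms(3) by blast
      ultimately show ?thesis by metis
    qed
    have step2: "(\<Sum>j1\<in>UNIV. coprod delta x i1 j1 * Pi j1 phi k) = x i1 * phi k" for i1 k
      using x unfolding memT by auto
    show ?thesis unfolding memT
    proof (intro allI)
      fix i k
      have "(\<Sum>j\<in>UNIV. coprod delta (amult mu x y) i j * Pi j phi k)
        = (\<Sum>j\<in>UNIV. \<Sum>i1\<in>UNIV. \<Sum>i2\<in>UNIV. \<Sum>j1\<in>UNIV. \<Sum>j2\<in>UNIV.
           coprod delta x i1 j1 * coprod delta y i2 j2 * mu i1 i2 i * (mu j1 j2 j * Pi j phi k))"
        unfolding cmult by (simp add: sum_distrib_right mult.assoc)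
      also have "\<dots> = (\<Sum>i1\<in>UNIV. \<Sum>i2\<in>UNIV. \<Sum>j1\<in>UNIV. \<Sum>j2\<in>UNIV. \<Sum>j\<in>UNIV.
           coprod delta x i1 j1 * coprod delta y i2 j2 * mu i1 i2 i * (mu j1 j2 j * Pi j phi k))"
        by (rule swap4)
      also have "\<dots> = (\<Sum>i1\<in>UNIV. \<Sum>i2\<in>UNIV. \<Sum>j1\<in>UNIV. \<Sum>j2\<in>UNIV.
           coprod delta x i1 j1 * coprod delta y i2 j2 * mu i1 i2 i * Pi j1 (Pi j2 phi) k)"
        by (simp add: Pmul sum_distrib_left)
      also have "\<dots> = (\<Sum>i1\<in>UNIV. \<Sum>i2\<in>UNIV. mu i1 i2 i * (\<Sum>j1\<in>UNIV. coprod delta x i1 j1 *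
           (\<Sum>j2\<in>UNIV. coprod delta y i2 j2 * Pi j1 (Pi j2 phi) k)))"
        by (simp add: sum_distrib_left mult_ac)
      also have "\<dots> = (\<Sum>i1\<in>UNIV. \<Sum>i2\<in>UNIV. mu i1 i2 i * y i2 * (\<Sum>j1\<in>UNIV. coprod delta x i1 j1 *
           Pi j1 phi k))"
        by (simp add: step1 sum_distrib_left mult_ac)
      also have "\<dots> = (\<Sum>i1\<in>UNIV. \<Sum>i2\<in>UNIV. x i1 * y i2 * mu i1 i2 i) * phi k"
        unfolding step2 by (simp add: sum_distrib_right sum_distrib_left mult_ac)
      also have "\<dots> = amult mu x y i * phi k" unfolding amult_def by simp
      finally show "(\<Sum>j\<in>UNIV. coprod delta (amult mu x y) i j * Pi j phi k) = amult mu x y i * phi k" .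
    qed
  qed
  have P1: "is_subalgebra mu one T"
    unfolding is_subalgebra_def using z o ad sm mu by blast
  have P2: "(\<lambda>j. coprod delta a i j) \<in> T" if a: "a \<in> T" for a i
    unfolding memT
  proof (intro allI)
    fix i' k
    have "(\<Sum>j\<in>UNIV. coprod delta (\<lambda>j. coprod delta a i j) i' j * Pi j phi k)
      = (\<Sum>j\<in>UNIV. (\<Sum>l\<in>UNIV. coprod delta a i l * delta l i' j) * Pi j phi k)"
      unfolding coprod_def by simp
    also have "\<dots> = (\<Sum>j\<in>UNIV. (\<Sum>l\<in>UNIV. coprod delta a l j * delta l i i') * Pi j phi k)"
    proof -
      have e: "\<And>j. (\<Sum>l\<in>UNIV. coprod delta a i l * delta l i' j) = (\<Sum>l\<in>UNIV. coprod delta a l j * delta l i i')"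
        using coassoc by metis
      show ?thesis by (simp only: e)
    qed
    also have "\<dots> = (\<Sum>l\<in>UNIV. delta l i i' * (\<Sum>j\<in>UNIV. coprod delta a l j * Pi j phi k))"
      unfolding sum_distrib_left sum_distrib_right by (subst sum.swap) (simp add: mult_ac)
    also have "\<dots> = (\<Sum>l\<in>UNIV. delta l i i' * (a l * phi k))"
      using a unfolding memT by simp
    also have "\<dots> = coprod delta a i i' * phi k"
      unfolding coprod_def by (simp add: sum_distrib_right sum_distrib_left mult_ac)
    finally show "(\<Sum>j\<in>UNIV. coprod delta (\<lambda>j. coprod delta a i j) i' j * Pi j phi k) =
          coprod delta a i i' * phi k" .
  qed
  have P3: "(\<Sum>j\<in>UNIV. \<Sum>m\<in>UNIV. (\<Sum>l\<in>UNIV. coprod delta a i l * delta l j m) * Pi j phi k * Pi m phi k')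
       = a i * phi k * phi k'" if a: "a \<in> T" for a i k k'
  proof -
    have "(\<Sum>j\<in>UNIV. \<Sum>m\<in>UNIV. (\<Sum>l\<in>UNIV. coprod delta a i l * delta l j m) * Pi j phi k * Pi m phi k')
      = (\<Sum>j\<in>UNIV. \<Sum>m\<in>UNIV. (\<Sum>l\<in>UNIV. coprod delta a l m * delta l i j) * Pi j phi k * Pi m phi k')"
    proof -
      have e: "\<And>j m. (\<Sum>l\<in>UNIV. coprod delta a i l * delta l j m) = (\<Sum>l\<in>UNIV. coprod delta a l m * delta l i j)"
        using coassoc by metis
      show ?thesis by (simp only: e)
    qed
    also have "\<dots> = (\<Sum>j\<in>UNIV. \<Sum>l\<in>UNIV. delta l i j * Pi j phi k * (\<Sum>m\<in>UNIV. coprod delta a l m * Pi m phi k'))"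
      by (rule sum.cong[OF refl], unfold sum_distrib_left sum_distrib_right, subst sum.swap, simp add: mult_ac)
    also have "\<dots> = (\<Sum>j\<in>UNIV. \<Sum>l\<in>UNIV. delta l i j * Pi j phi k * (a l * phi k'))"
      using a unfolding memT by simp
    also have "\<dots> = phi k' * (\<Sum>j\<in>UNIV. coprod delta a i j * Pi j phi k)"
      unfolding coprod_def by (simp add: sum_distrib_left sum_distrib_right mult_ac)
    also have "\<dots> = a i * phi k * phi k'"
      using a unfolding memT by simp
    finally show ?thesis .
  qed
  show ?thesis using P1 P2 P3 unfolding T_def by blast
qed

end
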